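(* Let $\mathcal A$ be an ordered normed algebra with unit $e$ whose algebra cone $\mathcal A^+$ is normal. Let $a,b\in\mathcal A$ satisfy $ab-ba\geq e$. Then $a$ is neither positive nor negative, and $b$ is neither positive nor negative; that is, $a\notin \mathcal A^+$, $a\notin -\mathcal A^+$, $b\notin\mathcal A^+$ and $b\notin -\mathcal A^+$.
   Context: A normed algebra $\mathcal A$ (real or complex, with submultiplicative norm) with unit $e$. A cone is a nonempty subset $\mathcal A^+\subseteq\mathcal A$ with $\mathcal A^++\mathcal A^+\subseteq\mathcal A^+$, $\lambda\mathcal A^+\subseteq\mathcal A^+$ for all $\lambda\geq 0$, and $\mathcal A^+\cap(-\mathcal A^+)=\{0\}$; it induces the partial order $a\leq b \iff b-a\in\mathcal A^+$. Elements of $\mathcal A^+$ are called positive, elements of $-\mathcal A^+$ negative. The cone is an algebra cone if $\mathcal A^+\cdot\mathcal A^+\subseteq\mathcal A^+$ and $e\in\mathcal A^+$; then $\mathcal A$ is called an ordered normed algebra. The cone is normal if there is a constant $\alpha>0$ (necessarily $\alpha\ge1$, called the normality constant) such that $0\leq x\leq y$ implies $\|x\|\leq\alpha\|y\|$. *)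

theory Defs
  imports Complex_Main
begin

text \<open>A cone in a real vector space (complex algebras are real vector spaces via scaleR).\<close>
definition ord_cone :: "'a::real_vector set \<Rightarrow> bool" where
  "ord_cone C \<longleftrightarrow> C \<noteq> {} \<and> (\<forall>x\<in>C. \<forall>y\<in>C. x + y \<in> C)
     \<and> (\<forall>t::real. t \<ge> 0 \<longrightarrow> (\<forall>x\<in>C. t *\<^sub>R x \<in> C))
     \<and> C \<inter> uminus ` C = {0}"

definition algebra_cone :: "'a::{real_algebra, ring_1} set \<Rightarrow> bool" where
  "algebra_cone C \<longleftrightarrow> ord_cone C \<and> (\<forall>x\<in>C. \<forall>y\<in>C. x * y \<in> C) \<and> 1 \<in> C"

definition cone_le :: "'a::real_vector set \<Rightarrow> 'a \<Rightarrow> 'a \<Rightarrow> bool" where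
  "cone_le C x y \<longleftrightarrow> y - x \<in> C"

definition normal_cone :: "'a::real_normed_vector set \<Rightarrow> bool" where
  "normal_cone C \<longleftrightarrow> (\<exists>\<alpha>>0. \<forall>x y. cone_le C 0 x \<and> cone_le C x y \<longrightarrow> norm x \<le> \<alpha> * norm y)"

end

theory Submission
  imports Defs
begin

lemma key:
  fixes C :: "'a::{real_normed_algebra, ring_1} set" and x y :: 'a
  assumes ac: "algebra_cone C" and nc: "normal_cone C"
    and xC: "x \<in> C" and c: "x * y - y * x - 1 \<in> C"
  shows False
proof -
  have add: "\<And>u v. u \<in> C \<Longrightarrow> v \<in> C \<Longrightarrow> u + v \<in> C"
    and sc: "\<And>t u. t \<ge> 0 \<Longrightarrow> u \<in> C \<Longrightarrow> t *\<^sub>R u \<in> C"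
    and mul: "\<And>u v. u \<in> C \<Longrightarrow> v \<in> C \<Longrightarrow> u * v \<in> C"
    and one: "1 \<in> C"
    using ac unfolding algebra_cone_def ord_cone_def by auto
  have pw: "x ^ n \<in> C" for n
    by (induction n) (auto intro: mul one xC)
  define D where "D n = x^(n+1) * y - y * x^(n+1) - real (n+1) *\<^sub>R x^n" for n
  have DC: "D n \<in> C" for n
  proof (induction n)
    case 0
    then show ?case using c by (simp add: D_def)
  next
    case (Suc n)
    have "D (Suc n) = x * D n + (x * y - y * x - 1) * x^(n+1)"
      by (simp add: D_def algebra_simps scaleR_add_left scaleR_2)
    then show ?case using Suc mul add xC c pw by metis
  qed
  from nc obtain \<alpha> where ap: "\<alpha> > 0" and
    nrm: "\<And>u v. cone_le C 0 u \<and> cone_le C u v \<Longrightarrow> norm u \<le> \<alpha> * norm v"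
    unfolding normal_cone_def by blast
  define K where "K = 2 * \<alpha> * norm x * norm y"
  have ineq1: "real (n+1) * norm (x^n) \<le> \<alpha> * norm (x^(n+1) * y - y * x^(n+1))" for n
  proof -
    have "cone_le C 0 (real (n+1) *\<^sub>R x^n)" unfolding cone_le_def using sc pw by simp
    moreover have "cone_le C (real (n+1) *\<^sub>R x^n) (x^(n+1) * y - y * x^(n+1))"
      unfolding cone_le_def using DC[of n] by (simp add: D_def)
    ultimately have "norm (real (n+1) *\<^sub>R x^n) \<le> \<alpha> * norm (x^(n+1) * y - y * x^(n+1))"
      using nrm by blast
    then show ?thesis by simp
  qed
  have ineq2: "real (n+1) * norm (x^n) \<le> K * norm (x^n)" for n
  proof -
    have "norm (x^(n+1) * y - y * x^(n+1)) \<le> norm (x^(n+1) * y) + norm (y * x^(n+1))"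
      by (rule norm_triangle_ineq4)
    also have "\<dots> \<le> norm (x^(n+1)) * norm y + norm y * norm (x^(n+1))"
      by (intro add_mono norm_mult_ineq)
    also have "\<dots> = 2 * norm y * norm (x * x^n)" by simp
    also have "\<dots> \<le> 2 * norm y * (norm x * norm (x^n))"
      by (intro mult_left_mono norm_mult_ineq) auto
    finally have "norm (x^(n+1) * y - y * x^(n+1)) \<le> 2 * norm y * (norm x * norm (x^n))" .
    then have "\<alpha> * norm (x^(n+1) * y - y * x^(n+1)) \<le> \<alpha> * (2 * norm y * (norm x * norm (x^n)))"
      using ap by (intro mult_left_mono) auto
    with ineq1[of n] show ?thesis unfolding K_def by (simp add: algebra_simps)
  qed
  obtain N :: nat where N: "real N > K" using reals_Archimedean2 by blast
  have "real (N+1) * norm (x^N) \<le> K * norm (x^N)" by (rule ineq2)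
  then have "(real (N+1) - K) * norm (x^N) \<le> 0" by (simp add: algebra_simps)
  moreover have "real (N+1) - K > 0" using N by simp
  ultimately have "norm (x^N) \<le> 0"
    by (metis mult_le_0_iff not_le)
  then have z: "x^N = 0" by simp
  have down: "x^(Suc n) = 0 \<Longrightarrow> x^n = 0" for n
  proof -
    assume h: "x^(Suc n) = 0"
    have "real (n+1) * norm (x^n) \<le> 0" using ineq1[of n] h by simp
    then have "norm (x^n) \<le> 0"
      by (metis add_pos_nonneg mult_le_0_iff not_le of_nat_0_le_iff of_nat_Suc zero_less_one Suc_eq_plus1)
    then show "x^n = 0" by simp
  qed
  have "x^(N - k) = 0" for k
  proof (induction k)
    case 0 then show ?case using z by simp
  next
    case (Suc k)
    show ?case
    proof (cases "k < N")
      case True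
      then have "Suc (N - Suc k) = N - k" by simp
      then show ?thesis using down Suc by metis
    next
      case False
      then have "N - Suc k = N - k" by simp
      then show ?thesis using Suc by simp
    qed
  qed
  from this[of N] show False by simp
qed

theorem theorem2p1:
  fixes C :: "'a::{real_normed_algebra, ring_1} set" and a b :: 'a
  assumes "algebra_cone C" and "normal_cone C"
    and "cone_le C 1 (a * b - b * a)"
  shows "a \<notin> C \<and> a \<notin> uminus ` C \<and> b \<notin> C \<and> b \<notin> uminus ` C"
proof -
  have c: "a * b - b * a - 1 \<in> C" using assms(3) unfolding cone_le_def .
  have 1: "a \<notin> C" using key[OF assms(1,2), of a b] c by blast
  have 2: "a \<notin> uminus ` C"
  proof
    assume "a \<in> uminus ` C"
    then have "-a \<in> C" by auto
    moreover have "(-a) * (-b) - (-b) * (-a) - 1 \<in> C" using c by simp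
    ultimately show False using key[OF assms(1,2)] by blast
  qed
  have 3: "b \<notin> C"
  proof
    assume "b \<in> C"
    moreover have "b * (-a) - (-a) * b - 1 \<in> C" using c by (simp add: algebra_simps)
    ultimately show False using key[OF assms(1,2)] by blast
  qed
  have 4: "b \<notin> uminus ` C"
  proof
    assume "b \<in> uminus ` C"
    then have "-b \<in> C" by auto
    moreover have "(-b) * a - a * (-b) - 1 \<in> C" using c by (simp add: algebra_simps)
    ultimately show False using key[OF assms(1,2)] by blast
  qed
  show ?thesis using 1 2 3 4 by blast
qed

end
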